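(* Let $m\in\mathbb{N}$ and $V\in H_{+}^{-m}$ be a 1-periodic complex-valued distribution. Then the sesquilinear forms $$t_{\pm}[u,v]:=\langle D_{\pm}^{2m}u,v\rangle_{\pm}+\langle V(x)u,v\rangle_{\pm},\qquad\mathrm{Dom}(t_{\pm})=H_{\pm}^{m},$$ are densely defined, closed and sectorial in the Hilbert space $L_{2}(0,1)$.
   Context: For $s\in\mathbb{R}$, $H_{+}^{s}$ is the space of formal series $f=\sum_{k\in\mathbb{Z}}\widehat f(2k)e^{i2k\pi x}$ with $\|f\|_{H_+^s}^2=\sum_k\langle 2k\rangle^{2s}|\widehat f(2k)|^2<\infty$, and $H_{-}^{s}$ is the space of formal series $f=\sum_{k}\widehat f(2k+1)e^{i(2k+1)\pi x}$ with $\|f\|_{H_-^s}^2=\sum_k\langle 2k+1\rangle^{2s}|\widehat f(2k+1)|^2<\infty$, where $\langle k\rangle=1+|k|$; $H_\pm^0=L_2(0,1)$. $\langle\cdot,\cdot\rangle_{\pm}$ is the pairing between $H_\pm^{s}$ and $H_\pm^{-s}$ extending the $L_2(0,1)$ inner product. $D_\pm^{2m}=|{-i\,d/dx}|^{2m}$ acts as multiplication by $(n\pi)^{2m}$ on the mode $e^{in\pi x}$. For $u\in H_\pm^{m}$, $V(x)u=\sum_n\big(\sum_j\widehat V(n-j)\widehat u(j)\big)e^{in\pi x}\in H_\pm^{-m}$. Closedness and sectoriality of forms are in the sense of Kato. *)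

theory Defs
  imports "HOL-Analysis.Analysis"
begin

text \<open>A formal series sum_n f(n) e^{i n pi x} is represented by its
coefficient function f :: int => complex. The periodic (+) spaces use even modes,
the antiperiodic (-) spaces use odd modes.\<close>

definition Pplus :: "int set" where "Pplus = {n. even n}"
definition Pminus :: "int set" where "Pminus = {n. odd n}"

definition bracket :: "int \<Rightarrow> real" where "bracket n = 1 + real_of_int \<bar>n\<bar>"

definition sob :: "int set \<Rightarrow> real \<Rightarrow> (int \<Rightarrow> complex) set" where
  "sob P s = {f. (\<forall>n. n \<notin> P \<longrightarrow> f n = 0) \<and>
      (\<lambda>n. bracket n powr (2 * s) * (cmod (f n))\<^sup>2) summable_on UNIV}"

text \<open>L_2(0,1) norm (Parseval, modes are orthonormal).\<close>
definition l2norm :: "(int \<Rightarrow> complex) \<Rightarrow> real" where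
  "l2norm f = sqrt (\<Sum>\<^sub>\<infinity>n. (cmod (f n))\<^sup>2)"

definition pairing :: "(int \<Rightarrow> complex) \<Rightarrow> (int \<Rightarrow> complex) \<Rightarrow> complex" where
  "pairing f g = (\<Sum>\<^sub>\<infinity>n. f n * cnj (g n))"

definition Dpow :: "nat \<Rightarrow> (int \<Rightarrow> complex) \<Rightarrow> (int \<Rightarrow> complex)" where
  "Dpow m u = (\<lambda>n. complex_of_real ((real_of_int n * pi) ^ (2 * m)) * u n)"

text \<open>Multiplication of u by the distribution V (convolution of Fourier coefficients).\<close>
definition mult_distr :: "(int \<Rightarrow> complex) \<Rightarrow> (int \<Rightarrow> complex) \<Rightarrow> (int \<Rightarrow> complex)" where
  "mult_distr V u = (\<lambda>n. \<Sum>\<^sub>\<infinity>j. V (n - j) * u j)"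

definition form_t :: "nat \<Rightarrow> (int \<Rightarrow> complex) \<Rightarrow> (int \<Rightarrow> complex) \<Rightarrow> (int \<Rightarrow> complex) \<Rightarrow> complex" where
  "form_t m V u v = pairing (Dpow m u) v + pairing (mult_distr V u) v"

definition form_well_defined :: "nat \<Rightarrow> (int \<Rightarrow> complex) \<Rightarrow> (int \<Rightarrow> complex) set \<Rightarrow> bool" where
  "form_well_defined m V D \<longleftrightarrow> (\<forall>u\<in>D. \<forall>v\<in>D.
      (\<forall>n. (\<lambda>j. V (n - j) * u j) summable_on UNIV) \<and>
      (\<lambda>n. Dpow m u n * cnj (v n)) summable_on UNIV \<and>
      (\<lambda>n. mult_distr V u n * cnj (v n)) summable_on UNIV)"

definition densely_defined :: "(int \<Rightarrow> complex) set \<Rightarrow> (int \<Rightarrow> complex) set \<Rightarrow> bool" where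
  "densely_defined H D \<longleftrightarrow> D \<subseteq> H \<and> (\<forall>f\<in>H. \<forall>\<epsilon>>0. \<exists>u\<in>D. l2norm (f - u) < \<epsilon>)"

definition sectorial_form :: "(int \<Rightarrow> complex) set \<Rightarrow> (int \<Rightarrow> complex) set
    \<Rightarrow> ((int \<Rightarrow> complex) \<Rightarrow> (int \<Rightarrow> complex) \<Rightarrow> complex) \<Rightarrow> bool" where
  "sectorial_form H D t \<longleftrightarrow> D \<subseteq> H \<and> (\<exists>\<gamma>::real. \<exists>\<theta>::real. 0 \<le> \<theta> \<and> \<theta> < pi / 2 \<and>
      (\<forall>u\<in>D. l2norm u = 1 \<longrightarrow>
         t u u = complex_of_real \<gamma> \<or> \<bar>Arg (t u u - complex_of_real \<gamma>)\<bar> \<le> \<theta>))"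

definition closed_form :: "(int \<Rightarrow> complex) set \<Rightarrow> (int \<Rightarrow> complex) set
    \<Rightarrow> ((int \<Rightarrow> complex) \<Rightarrow> (int \<Rightarrow> complex) \<Rightarrow> complex) \<Rightarrow> bool" where
  "closed_form H D t \<longleftrightarrow> D \<subseteq> H \<and> (\<forall>us u. (\<forall>k. us k \<in> D) \<and> u \<in> H \<and>
      (\<lambda>k. l2norm (us k - u)) \<longlonglongrightarrow> 0 \<and>
      (\<forall>\<epsilon>>0. \<exists>N. \<forall>k\<ge>N. \<forall>l\<ge>N. cmod (t (us k - us l) (us k - us l)) < \<epsilon>)
      \<longrightarrow> u \<in> D \<and> (\<lambda>k. t (us k - u) (us k - u)) \<longlonglongrightarrow> 0)"

end

theory Submission
  imports Defs
begin


lemma amgm: fixes x y l :: real assumes "l > 0" shows "x*y \<le> (l/2)*x^2 + (1/(2*l))*y^2"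
proof -
  have "0 \<le> (l*x - y)^2/l" using assms by simp
  also have "(l*x - y)^2/l = l*x^2 - 2*x*y + y^2/l" using assms
    by (simp add: power2_eq_square field_simps)
  finally show ?thesis by (simp add: field_simps)
qed

lemma cs:
  fixes f g :: "'a \<Rightarrow> real"
  assumes f0: "\<And>x. f x \<ge> 0" and g0: "\<And>x. g x \<ge> 0"
    and sf: "(\<lambda>x. (f x)^2) summable_on A" and sg: "(\<lambda>x. (g x)^2) summable_on A"
  shows "(\<lambda>x. f x * g x) summable_on A"
    "(\<Sum>\<^sub>\<infinity>x\<in>A. f x * g x) \<le> sqrt (\<Sum>\<^sub>\<infinity>x\<in>A. (f x)^2) * sqrt (\<Sum>\<^sub>\<infinity>x\<in>A. (g x)^2)"
proof -
  define F where "F = (\<Sum>\<^sub>\<infinity>x\<in>A. (f x)^2)"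
  define G where "G = (\<Sum>\<^sub>\<infinity>x\<in>A. (g x)^2)"
  define I where "I = (\<Sum>\<^sub>\<infinity>x\<in>A. f x * g x)"
  have F0: "F \<ge> 0" unfolding F_def by (intro infsum_nonneg) auto
  have G0: "G \<ge> 0" unfolding G_def by (intro infsum_nonneg) auto
  have sb: "\<And>l. (\<lambda>x. (l/2)*(f x)^2 + (1/(2*l))*(g x)^2) summable_on A"
    using sf sg by (intro summable_on_add summable_on_cmult_right) auto
  show sfg: "(\<lambda>x. f x * g x) summable_on A"
    by (rule summable_on_comparison_test[OF sb[of 1]]) (use amgm[of 1] f0 g0 in auto)
  have I0: "I \<ge> 0" unfolding I_def by (intro infsum_nonneg) (simp add: f0 g0)
  have bnd: "I \<le> (l/2)*F + (1/(2*l))*G" if "l > 0" for l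
  proof -
    have "I \<le> (\<Sum>\<^sub>\<infinity>x\<in>A. (l/2)*(f x)^2 + (1/(2*l))*(g x)^2)"
      unfolding I_def by (rule infsum_mono[OF sfg sb]) (use amgm that in auto)
    also have "\<dots> = (l/2)*F + (1/(2*l))*G"
      unfolding F_def G_def
      by (subst infsum_add, rule summable_on_cmult_right[OF sf], rule summable_on_cmult_right[OF sg],
          subst infsum_cmult_right, rule sf, subst infsum_cmult_right, rule sg, rule refl)
    finally show ?thesis .
  qed
  show "I \<le> sqrt F * sqrt G"
  proof (cases "F = 0 \<or> G = 0")
    case True
    show ?thesis
    proof (rule ccontr)
      assume "\<not> ?thesis"
      then have Ip: "I > 0" using True by auto
      show False
      proof (cases "F = 0")
        case True
        have "I \<le> (1/(2*((G+1)/I)))*G" using bnd[of "(G+1)/I"] Ip G0 True by simp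
        also have "\<dots> = I*G/(2*(G+1))" using Ip G0 by (simp add: field_simps)
        also have "\<dots> < I" using Ip G0 by (simp add: field_simps) (simp add: add_nonneg_pos)
        finally show False by simp
      next
        case False
        then have G: "G = 0" using \<open>F = 0 \<or> G = 0\<close> by simp
        have "I \<le> (I/(F+1))/2*F" using bnd[of "I/(F+1)"] Ip F0 G by simp
        also have "\<dots> = I*F/(2*(F+1))" using Ip F0 by (simp add: field_simps)
        also have "\<dots> < I" using Ip F0 by (simp add: field_simps) (simp add: add_nonneg_pos)
        finally show False by simp
      qed
    qed
  next
    case False
    then have Fp: "F > 0" and Gp: "G > 0" using F0 G0 by auto
    define l where "l = sqrt G / sqrt F"
    have lp: "l > 0" unfolding l_def using Fp Gp by simp
    have "I \<le> (l/2)*F + (1/(2*l))*G" by (rule bnd[OF lp])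
    also have "\<dots> = sqrt F * sqrt G"
    proof -
      have "(l/2)*F = sqrt F * sqrt G / 2" unfolding l_def using Fp Gp
        by (simp add: field_simps)
      moreover have "(1/(2*l))*G = sqrt F * sqrt G / 2" unfolding l_def using Fp Gp
        by (simp add: field_simps)
      ultimately show ?thesis by simp
    qed
    finally show ?thesis .
  qed
qed

lemma shift1:
  fixes h :: "int \<Rightarrow> 'b::{comm_monoid_add,t2_space}"
  shows "(\<lambda>j. h (c - j)) summable_on UNIV \<longleftrightarrow> h summable_on UNIV"
    "infsum (\<lambda>j. h (c - j)) UNIV = infsum h UNIV"
  by (rule summable_on_reindex_bij_witness[of _ "\<lambda>j. c - j" "\<lambda>j. c - j"]; simp)
     (rule infsum_reindex_bij_witness[of _ "\<lambda>j. c - j" "\<lambda>j. c - j"]; simp)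

lemma shift2:
  fixes h :: "int \<Rightarrow> 'b::{comm_monoid_add,t2_space}"
  shows "(\<lambda>j. h (j - c)) summable_on UNIV \<longleftrightarrow> h summable_on UNIV"
    "infsum (\<lambda>j. h (j - c)) UNIV = infsum h UNIV"
  by (rule summable_on_reindex_bij_witness[of _ "\<lambda>j. j + c" "\<lambda>j. j - c"]; simp)
     (rule infsum_reindex_bij_witness[of _ "\<lambda>j. j + c" "\<lambda>j. j - c"]; simp)

lemma conv_a:
  fixes \<phi> y :: "int \<Rightarrow> real"
  assumes p0: "\<And>k. \<phi> k \<ge> 0" and y0: "\<And>k. y k \<ge> 0"
    and sp: "(\<lambda>k. (\<phi> k)^2) summable_on UNIV" and sy: "(\<lambda>k. (y k)^2) summable_on UNIV"
  shows "(\<lambda>j. \<phi> (n - j) * y j) summable_on UNIV"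
    "(\<Sum>\<^sub>\<infinity>j. \<phi> (n - j) * y j) \<le> sqrt (\<Sum>\<^sub>\<infinity>k. (\<phi> k)^2) * sqrt (\<Sum>\<^sub>\<infinity>k. (y k)^2)"
    "(\<lambda>j. \<phi> (j - n) * y j) summable_on UNIV"
    "(\<Sum>\<^sub>\<infinity>j. \<phi> (j - n) * y j) \<le> sqrt (\<Sum>\<^sub>\<infinity>k. (\<phi> k)^2) * sqrt (\<Sum>\<^sub>\<infinity>k. (y k)^2)"
proof -
  have s1: "(\<lambda>j. (\<phi> (n - j))^2) summable_on UNIV" using sp shift1(1)[of "\<lambda>k. (\<phi> k)^2"] by simp
  have s2: "(\<lambda>j. (\<phi> (j - n))^2) summable_on UNIV" using sp shift2(1)[of "\<lambda>k. (\<phi> k)^2"] by simp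
  have e1: "(\<Sum>\<^sub>\<infinity>j. (\<phi> (n - j))^2) = (\<Sum>\<^sub>\<infinity>k. (\<phi> k)^2)" using shift1(2)[of "\<lambda>k. (\<phi> k)^2"] by simp
  have e2: "(\<Sum>\<^sub>\<infinity>j. (\<phi> (j - n))^2) = (\<Sum>\<^sub>\<infinity>k. (\<phi> k)^2)" using shift2(2)[of "\<lambda>k. (\<phi> k)^2"] by simp
  show "(\<lambda>j. \<phi> (n - j) * y j) summable_on UNIV"
    "(\<Sum>\<^sub>\<infinity>j. \<phi> (n - j) * y j) \<le> sqrt (\<Sum>\<^sub>\<infinity>k. (\<phi> k)^2) * sqrt (\<Sum>\<^sub>\<infinity>k. (y k)^2)"
    using cs[of "\<lambda>j. \<phi> (n - j)" y, OF p0 y0 s1 sy] e1 by auto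
  show "(\<lambda>j. \<phi> (j - n) * y j) summable_on UNIV"
    "(\<Sum>\<^sub>\<infinity>j. \<phi> (j - n) * y j) \<le> sqrt (\<Sum>\<^sub>\<infinity>k. (\<phi> k)^2) * sqrt (\<Sum>\<^sub>\<infinity>k. (y k)^2)"
    using cs[of "\<lambda>j. \<phi> (j - n)" y, OF p0 y0 s2 sy] e2 by auto
qed

lemma conv_b:
  fixes \<phi> x y :: "int \<Rightarrow> real"
  assumes p0: "\<And>k. \<phi> k \<ge> 0" and x0: "\<And>k. x k \<ge> 0" and y0: "\<And>k. y k \<ge> 0"
    and sp: "(\<lambda>k. (\<phi> k)^2) summable_on UNIV" and sy: "(\<lambda>k. (y k)^2) summable_on UNIV"
    and sx: "x summable_on UNIV"
  shows "(\<lambda>n. x n * (\<Sum>\<^sub>\<infinity>j. \<phi> (n - j) * y j)) summable_on UNIV"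
    "(\<Sum>\<^sub>\<infinity>n. x n * (\<Sum>\<^sub>\<infinity>j. \<phi> (n - j) * y j)) \<le>
       (\<Sum>\<^sub>\<infinity>n. x n) * (sqrt (\<Sum>\<^sub>\<infinity>k. (\<phi> k)^2) * sqrt (\<Sum>\<^sub>\<infinity>k. (y k)^2))"
proof -
  define C where "C = sqrt (\<Sum>\<^sub>\<infinity>k. (\<phi> k)^2) * sqrt (\<Sum>\<^sub>\<infinity>k. (y k)^2)"
  have i0: "0 \<le> (\<Sum>\<^sub>\<infinity>j. \<phi> (n - j) * y j)" for n by (intro infsum_nonneg) (simp add: p0 y0)
  have iC: "(\<Sum>\<^sub>\<infinity>j. \<phi> (n - j) * y j) \<le> C" for n unfolding C_def by (rule conv_a(2)[OF p0 y0 sp sy])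
  have sxC: "(\<lambda>n. x n * C) summable_on UNIV" by (rule summable_on_cmult_left[OF sx])
  show s: "(\<lambda>n. x n * (\<Sum>\<^sub>\<infinity>j. \<phi> (n - j) * y j)) summable_on UNIV"
    by (rule summable_on_comparison_test[OF sxC]) (auto intro!: mult_left_mono iC x0 i0 mult_nonneg_nonneg)
  have "(\<Sum>\<^sub>\<infinity>n. x n * (\<Sum>\<^sub>\<infinity>j. \<phi> (n - j) * y j)) \<le> (\<Sum>\<^sub>\<infinity>n. x n * C)"
    by (rule infsum_mono[OF s sxC]) (auto intro!: mult_left_mono iC x0)
  also have "\<dots> = (\<Sum>\<^sub>\<infinity>n. x n) * C" by (rule infsum_cmult_left[OF sx])
  finally show "(\<Sum>\<^sub>\<infinity>n. x n * (\<Sum>\<^sub>\<infinity>j. \<phi> (n - j) * y j)) \<le> (\<Sum>\<^sub>\<infinity>n. x n) * C" .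
qed

lemma conv_c:
  fixes \<phi> x y :: "int \<Rightarrow> real"
  assumes p0: "\<And>k. \<phi> k \<ge> 0" and x0: "\<And>k. x k \<ge> 0" and y0: "\<And>k. y k \<ge> 0"
    and sp: "(\<lambda>k. (\<phi> k)^2) summable_on UNIV" and sy: "(\<lambda>k. (y k)^2) summable_on UNIV"
    and sx: "x summable_on UNIV"
  shows "(\<lambda>n. y n * (\<Sum>\<^sub>\<infinity>j. \<phi> (n - j) * x j)) summable_on UNIV"
    "(\<Sum>\<^sub>\<infinity>n. y n * (\<Sum>\<^sub>\<infinity>j. \<phi> (n - j) * x j)) \<le>
       (\<Sum>\<^sub>\<infinity>n. x n) * (sqrt (\<Sum>\<^sub>\<infinity>k. (\<phi> k)^2) * sqrt (\<Sum>\<^sub>\<infinity>k. (y k)^2))"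
proof -
  define C where "C = sqrt (\<Sum>\<^sub>\<infinity>k. (\<phi> k)^2) * sqrt (\<Sum>\<^sub>\<infinity>k. (y k)^2)"
  define g where "g = (\<lambda>j n. x j * (\<phi> (n - j) * y n))"
  have g0: "g j n \<ge> 0" for j n unfolding g_def by (simp add: x0 p0 y0)
  have inner: "(\<lambda>n. \<phi> (n - j) * y n) summable_on UNIV" for j by (rule conv_a(3)[OF p0 y0 sp sy])
  have innerC: "(\<Sum>\<^sub>\<infinity>n. \<phi> (n - j) * y n) \<le> C" for j unfolding C_def by (rule conv_a(4)[OF p0 y0 sp sy])
  have gs: "(\<lambda>n. g j n) summable_on UNIV" for j unfolding g_def by (rule summable_on_cmult_right[OF inner])
  have gsum: "(\<Sum>\<^sub>\<infinity>n. g j n) = x j * (\<Sum>\<^sub>\<infinity>n. \<phi> (n - j) * y n)" for j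
    unfolding g_def by (rule infsum_cmult_right[OF inner])
  have prod: "(\<lambda>(j, n). g j n) summable_on UNIV \<times> UNIV"
  proof -
    have "(\<lambda>p. norm (g (fst p) (snd p))) summable_on Sigma UNIV (\<lambda>_. UNIV)"
    proof (rule iffD2[OF Infinite_Sum.abs_summable_on_Sigma_iff[where f="\<lambda>p. g (fst p) (snd p)" and A=UNIV and B="\<lambda>_. UNIV"]], intro conjI ballI)
      fix j :: int
      show "(\<lambda>n. norm (g (fst (j, n)) (snd (j, n)))) summable_on UNIV"
        using gs[of j] g0 by simp
    next
      have e: "(\<Sum>\<^sub>\<infinity>n. norm (g (fst (j, n)) (snd (j, n)))) = x j * (\<Sum>\<^sub>\<infinity>n. \<phi> (n - j) * y n)" for j
        using gsum[of j] g0 by simp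
      have i0: "0 \<le> (\<Sum>\<^sub>\<infinity>n. \<phi> (n - j) * y n)" for j by (intro infsum_nonneg) (simp add: p0 y0)
      have "(\<lambda>j. x j * (\<Sum>\<^sub>\<infinity>n. \<phi> (n - j) * y n)) summable_on UNIV"
        by (rule summable_on_comparison_test[OF summable_on_cmult_left[OF sx, of C]])
           (auto intro!: mult_left_mono innerC x0 i0 mult_nonneg_nonneg)
      then show "(\<lambda>j. norm (\<Sum>\<^sub>\<infinity>n. norm (g (fst (j, n)) (snd (j, n))))) summable_on UNIV"
        unfolding e using x0 i0 by simp
    qed
    then have A: "(\<lambda>p. g (fst p) (snd p)) summable_on UNIV \<times> UNIV"
      by (rule summable_on_cong[THEN iffD1, rotated]) (simp add: g0)
    have B: "(\<lambda>(j, n). g j n) = (\<lambda>p. g (fst p) (snd p))" by (rule ext) (simp add: split_beta)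
    show ?thesis unfolding B by (rule A)
  qed
  have swp: "(\<lambda>(n, j). g j n) summable_on UNIV \<times> UNIV"
  proof -
    have "(\<lambda>(n, j). g j n) summable_on UNIV \<times> UNIV \<longleftrightarrow> (\<lambda>(j, n). g j n) summable_on UNIV \<times> UNIV"
      by (rule summable_on_reindex_bij_witness[of _ prod.swap prod.swap]) auto
    then show ?thesis using prod by blast
  qed
  have eq1: "(\<lambda>n. y n * (\<Sum>\<^sub>\<infinity>j. \<phi> (n - j) * x j)) = (\<lambda>n. \<Sum>\<^sub>\<infinity>j. g j n)"
  proof
    fix n
    have "(\<Sum>\<^sub>\<infinity>j. g j n) = (\<Sum>\<^sub>\<infinity>j. y n * (\<phi> (n - j) * x j))" unfolding g_def
      by (rule infsum_cong) simp
    also have "\<dots> = y n * (\<Sum>\<^sub>\<infinity>j. \<phi> (n - j) * x j)"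
      by (rule infsum_cmult_right') 
    finally show "y n * (\<Sum>\<^sub>\<infinity>j. \<phi> (n - j) * x j) = (\<Sum>\<^sub>\<infinity>j. g j n)" by simp
  qed
  show "(\<lambda>n. y n * (\<Sum>\<^sub>\<infinity>j. \<phi> (n - j) * x j)) summable_on UNIV"
    unfolding eq1 using summable_on_Sigma_banach[OF swp] by simp
  have "(\<Sum>\<^sub>\<infinity>n. y n * (\<Sum>\<^sub>\<infinity>j. \<phi> (n - j) * x j)) = (\<Sum>\<^sub>\<infinity>n. \<Sum>\<^sub>\<infinity>j. g j n)"
    unfolding eq1 ..
  also have "\<dots> = (\<Sum>\<^sub>\<infinity>j. \<Sum>\<^sub>\<infinity>n. g j n)"
    by (rule infsum_swap_banach[OF swp])
  also have "\<dots> = (\<Sum>\<^sub>\<infinity>j. x j * (\<Sum>\<^sub>\<infinity>n. \<phi> (n - j) * y n))" by (simp add: gsum)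
  also have "\<dots> \<le> (\<Sum>\<^sub>\<infinity>j. x j * C)"
  proof (rule infsum_mono)
    have i0: "0 \<le> (\<Sum>\<^sub>\<infinity>n. \<phi> (n - j) * y n)" for j by (intro infsum_nonneg) (simp add: p0 y0)
    show "(\<lambda>j. x j * (\<Sum>\<^sub>\<infinity>n. \<phi> (n - j) * y n)) summable_on UNIV"
        by (rule summable_on_comparison_test[OF summable_on_cmult_left[OF sx, of C]])
           (auto intro!: mult_left_mono innerC x0 i0 mult_nonneg_nonneg)
    show "(\<lambda>j. x j * C) summable_on UNIV" by (rule summable_on_cmult_left[OF sx])
    show "x j * (\<Sum>\<^sub>\<infinity>n. \<phi> (n - j) * y n) \<le> x j * C" for j by (auto intro!: mult_left_mono innerC x0)
  qed
  also have "\<dots> = (\<Sum>\<^sub>\<infinity>n. x n) * C" by (rule infsum_cmult_left[OF sx])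
  finally show "(\<Sum>\<^sub>\<infinity>n. y n * (\<Sum>\<^sub>\<infinity>j. \<phi> (n - j) * x j)) \<le> (\<Sum>\<^sub>\<infinity>n. x n) * C" .
qed



lemma bracket_ge1: "bracket n \<ge> 1" unfolding bracket_def by simp
lemma bracket_pos: "bracket n > 0" using bracket_ge1[of n] by simp

lemma bracket_diff: "bracket (n - j) \<le> bracket n + bracket j"
  unfolding bracket_def by simp

lemma pow_sum_le: fixes a b :: real assumes "a \<ge> 0" "b \<ge> 0"
  shows "(a + b)^m \<le> 2^m * (a^m + b^m)"
proof -
  have "(a + b)^m \<le> (2 * max a b)^m" using assms by (intro power_mono) auto
  also have "\<dots> = 2^m * (max a b)^m" by (simp add: power_mult_distrib)
  also have "(max a b)^m \<le> a^m + b^m" using assms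
    by (cases "a \<le> b") (auto simp: max_def)
  hence "2^m * (max a b)^m \<le> 2^m * (a^m + b^m)" by simp
  finally show ?thesis .
qed

lemma bracket_diff_pow: "bracket (n - j) ^ m \<le> 2^m * (bracket n ^ m + bracket j ^ m)"
proof -
  have "bracket (n - j) ^ m \<le> (bracket n + bracket j)^m"
    using bracket_diff bracket_pos by (intro power_mono) (auto intro: less_imp_le)
  also have "\<dots> \<le> 2^m * (bracket n ^ m + bracket j ^ m)"
    using bracket_pos by (intro pow_sum_le) (auto intro: less_imp_le)
  finally show ?thesis .
qed

lemma main_bound:
  fixes W u v :: "int \<Rightarrow> complex"
  assumes sW: "(\<lambda>k. (cmod (W k) / bracket k ^ m)^2) summable_on UNIV"
    and su: "(\<lambda>k. (bracket k ^ m * cmod (u k))^2) summable_on UNIV"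
    and sv: "(\<lambda>k. (bracket k ^ m * cmod (v k))^2) summable_on UNIV"
    and lu: "(\<lambda>k. cmod (u k)) summable_on UNIV"
    and lv: "(\<lambda>k. cmod (v k)) summable_on UNIV"
  shows "(\<lambda>j. cmod (W (n - j)) * cmod (u j)) summable_on UNIV"
    "(\<lambda>n. cmod (v n) * (\<Sum>\<^sub>\<infinity>j. cmod (W (n - j)) * cmod (u j))) summable_on UNIV"
    "(\<Sum>\<^sub>\<infinity>n. cmod (v n) * (\<Sum>\<^sub>\<infinity>j. cmod (W (n - j)) * cmod (u j))) \<le>
      2^m * sqrt (\<Sum>\<^sub>\<infinity>k. (cmod (W k) / bracket k ^ m)^2) *
       ((\<Sum>\<^sub>\<infinity>k. cmod (v k)) * sqrt (\<Sum>\<^sub>\<infinity>k. (bracket k ^ m * cmod (u k))^2) +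
        (\<Sum>\<^sub>\<infinity>k. cmod (u k)) * sqrt (\<Sum>\<^sub>\<infinity>k. (bracket k ^ m * cmod (v k))^2))"
proof -
  define \<phi> where "\<phi> k = cmod (W k) / bracket k ^ m" for k
  define au where "au k = bracket k ^ m * cmod (u k)" for k
  define av where "av k = bracket k ^ m * cmod (v k)" for k
  define bu where "bu k = cmod (u k)" for k
  define bv where "bv k = cmod (v k)" for k
  have p0: "\<phi> k \<ge> 0" for k unfolding \<phi>_def using bracket_pos[of k] by simp
  have au0: "au k \<ge> 0" for k unfolding au_def using bracket_pos[of k] by simp
  have av0: "av k \<ge> 0" for k unfolding av_def using bracket_pos[of k] by simp
  have bu0: "bu k \<ge> 0" for k unfolding bu_def by simp
  have bv0: "bv k \<ge> 0" for k unfolding bv_def by simp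
  have sp: "(\<lambda>k. (\<phi> k)^2) summable_on UNIV" using sW unfolding \<phi>_def .
  have sau: "(\<lambda>k. (au k)^2) summable_on UNIV" using su unfolding au_def .
  have sav: "(\<lambda>k. (av k)^2) summable_on UNIV" using sv unfolding av_def .
  have bu_le: "(bu k)^2 \<le> (au k)^2" for k
  proof -
    have "1 \<le> bracket k ^ m" using bracket_ge1 by simp
    hence "bu k \<le> au k" unfolding bu_def au_def
      using mult_right_mono[of 1 "bracket k ^ m" "cmod (u k)"] by simp
    thus ?thesis using bu0 by (simp add: power_mono)
  qed
  have sbu: "(\<lambda>k. (bu k)^2) summable_on UNIV"
    by (rule summable_on_comparison_test[OF sau]) (use bu_le in auto)
  have lbu: "bu summable_on UNIV" using lu unfolding bu_def .
  have lbv: "bv summable_on UNIV" using lv unfolding bv_def .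
  have W_eq: "cmod (W k) = bracket k ^ m * \<phi> k" for k
    unfolding \<phi>_def using bracket_pos[of k] by simp
  have pw: "cmod (W (n - j)) * cmod (u j) \<le> 2^m * (bracket n ^ m * (\<phi> (n - j) * bu j) + \<phi> (n - j) * au j)" for n j
  proof -
    have "cmod (W (n - j)) * cmod (u j) = bracket (n - j) ^ m * (\<phi> (n - j) * bu j)"
      unfolding W_eq bu_def by simp
    also have "\<dots> \<le> (2^m * (bracket n ^ m + bracket j ^ m)) * (\<phi> (n - j) * bu j)"
      by (rule mult_right_mono[OF bracket_diff_pow]) (simp add: p0 bu0)
    also have "\<dots> = 2^m * (bracket n ^ m * (\<phi> (n - j) * bu j) + \<phi> (n - j) * au j)"
      unfolding au_def bu_def by (simp add: algebra_simps)
    finally show ?thesis .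
  qed
  define S1 where "S1 n = (\<Sum>\<^sub>\<infinity>j. \<phi> (n - j) * bu j)" for n
  define S2 where "S2 n = (\<Sum>\<^sub>\<infinity>j. \<phi> (n - j) * au j)" for n
  have s1: "(\<lambda>j. \<phi> (n - j) * bu j) summable_on UNIV" for n by (rule conv_a(1)[OF p0 bu0 sp sbu])
  have s2: "(\<lambda>j. \<phi> (n - j) * au j) summable_on UNIV" for n by (rule conv_a(1)[OF p0 au0 sp sau])
  have sR: "(\<lambda>j. 2^m * (bracket n ^ m * (\<phi> (n - j) * bu j) + \<phi> (n - j) * au j)) summable_on UNIV" for n
    by (intro summable_on_cmult_right summable_on_add s1 s2)
  have eR: "(\<Sum>\<^sub>\<infinity>j. 2^m * (bracket n ^ m * (\<phi> (n - j) * bu j) + \<phi> (n - j) * au j))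
      = 2^m * (bracket n ^ m * S1 n + S2 n)" for n
    unfolding S1_def S2_def
    by (subst infsum_cmult_right, intro summable_on_cmult_right summable_on_add s1 s2,
        subst infsum_add, rule summable_on_cmult_right[OF s1], rule s2,
        subst infsum_cmult_right, rule s1, rule refl)
  show s0: "(\<lambda>j. cmod (W (n - j)) * cmod (u j)) summable_on UNIV" for n
    by (rule summable_on_comparison_test[OF sR]) (use pw in auto)
  have inner: "(\<Sum>\<^sub>\<infinity>j. cmod (W (n - j)) * cmod (u j)) \<le> 2^m * (bracket n ^ m * S1 n + S2 n)" for n
    unfolding eR[symmetric] by (rule infsum_mono[OF s0 sR]) (rule pw)
  have inner0: "0 \<le> (\<Sum>\<^sub>\<infinity>j. cmod (W (n - j)) * cmod (u j))" for n by (intro infsum_nonneg) simp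
  have c1: "(\<lambda>n. av n * S1 n) summable_on UNIV"
    "(\<Sum>\<^sub>\<infinity>n. av n * S1 n) \<le> (\<Sum>\<^sub>\<infinity>n. bu n) * (sqrt (\<Sum>\<^sub>\<infinity>k. (\<phi> k)^2) * sqrt (\<Sum>\<^sub>\<infinity>k. (av k)^2))"
    unfolding S1_def by (rule conv_c[OF p0 bu0 av0 sp sav lbu])+
  have c2: "(\<lambda>n. bv n * S2 n) summable_on UNIV"
    "(\<Sum>\<^sub>\<infinity>n. bv n * S2 n) \<le> (\<Sum>\<^sub>\<infinity>n. bv n) * (sqrt (\<Sum>\<^sub>\<infinity>k. (\<phi> k)^2) * sqrt (\<Sum>\<^sub>\<infinity>k. (au k)^2))"
    unfolding S2_def by (rule conv_b[OF p0 bv0 au0 sp sau lbv])+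
  have sT: "(\<lambda>n. 2^m * (av n * S1 n + bv n * S2 n)) summable_on UNIV"
    by (intro summable_on_cmult_right summable_on_add c1(1) c2(1))
  have pt: "cmod (v n) * (\<Sum>\<^sub>\<infinity>j. cmod (W (n - j)) * cmod (u j)) \<le> 2^m * (av n * S1 n + bv n * S2 n)" for n
  proof -
    have "cmod (v n) * (\<Sum>\<^sub>\<infinity>j. cmod (W (n - j)) * cmod (u j)) \<le> cmod (v n) * (2^m * (bracket n ^ m * S1 n + S2 n))"
      by (rule mult_left_mono[OF inner]) simp
    also have "\<dots> = 2^m * (av n * S1 n + bv n * S2 n)" unfolding av_def bv_def by (simp add: algebra_simps)
    finally show ?thesis .
  qed
  show sL: "(\<lambda>n. cmod (v n) * (\<Sum>\<^sub>\<infinity>j. cmod (W (n - j)) * cmod (u j))) summable_on UNIV"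
    by (rule summable_on_comparison_test[OF sT]) (use pt inner0 in auto)
  have "(\<Sum>\<^sub>\<infinity>n. cmod (v n) * (\<Sum>\<^sub>\<infinity>j. cmod (W (n - j)) * cmod (u j))) \<le> (\<Sum>\<^sub>\<infinity>n. 2^m * (av n * S1 n + bv n * S2 n))"
    by (rule infsum_mono[OF sL sT]) (rule pt)
  also have "\<dots> = 2^m * ((\<Sum>\<^sub>\<infinity>n. av n * S1 n) + (\<Sum>\<^sub>\<infinity>n. bv n * S2 n))"
    by (subst infsum_cmult_right, intro summable_on_add c1(1) c2(1), subst infsum_add, rule c1(1), rule c2(1), rule refl)
  also have "\<dots> \<le> 2^m * ((\<Sum>\<^sub>\<infinity>n. bu n) * (sqrt (\<Sum>\<^sub>\<infinity>k. (\<phi> k)^2) * sqrt (\<Sum>\<^sub>\<infinity>k. (av k)^2))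
      + (\<Sum>\<^sub>\<infinity>n. bv n) * (sqrt (\<Sum>\<^sub>\<infinity>k. (\<phi> k)^2) * sqrt (\<Sum>\<^sub>\<infinity>k. (au k)^2)))"
    using c1(2) c2(2) by simp
  finally show "(\<Sum>\<^sub>\<infinity>n. cmod (v n) * (\<Sum>\<^sub>\<infinity>j. cmod (W (n - j)) * cmod (u j))) \<le>
      2^m * sqrt (\<Sum>\<^sub>\<infinity>k. (cmod (W k) / bracket k ^ m)^2) *
       ((\<Sum>\<^sub>\<infinity>k. cmod (v k)) * sqrt (\<Sum>\<^sub>\<infinity>k. (bracket k ^ m * cmod (u k))^2) +
        (\<Sum>\<^sub>\<infinity>k. cmod (u k)) * sqrt (\<Sum>\<^sub>\<infinity>k. (bracket k ^ m * cmod (v k))^2))"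
    unfolding \<phi>_def au_def av_def bu_def bv_def by (simp add: algebra_simps)
qed



lemma sumZ: "(\<lambda>k::int. inverse (bracket k ^ 2)) summable_on UNIV"
proof -
  have "summable (\<lambda>n::nat. inverse (real n ^ 2))" by (rule inverse_power_summable) simp
  hence "summable (\<lambda>n::nat. inverse (real (Suc n) ^ 2))" by (subst summable_Suc_iff)
  hence nat: "(\<lambda>n::nat. inverse (real (Suc n) ^ 2)) summable_on UNIV"
    by (subst summable_on_UNIV_nonneg_real_iff) auto
  have A: "(\<lambda>k. inverse (bracket k ^ 2)) summable_on range int"
    by (subst summable_on_reindex) (use nat in \<open>simp_all add: o_def bracket_def add.commute\<close>)
  have B: "(\<lambda>k. inverse (bracket k ^ 2)) summable_on range (\<lambda>n. - int n)"
    by (subst summable_on_reindex) (use nat in \<open>simp_all add: o_def bracket_def add.commute inj_on_def\<close>)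
  have U: "range int \<union> range (\<lambda>n. - int n) = (UNIV :: int set)"
  proof -
    have "k \<in> range int \<union> range (\<lambda>n. - int n)" for k :: int
    proof (cases "k \<ge> 0")
      case True then have "k = int (nat k)" by simp
      then show ?thesis by blast
    next
      case False then have "k = - int (nat (-k))" by simp
      then show ?thesis by blast
    qed
    then show ?thesis by blast
  qed
  show ?thesis using summable_on_union[OF A B] unfolding U .
qed

lemma sobm_iff: "u \<in> sob P (real m) \<longleftrightarrow> (\<forall>n. n \<notin> P \<longrightarrow> u n = 0) \<and> (\<lambda>k. (bracket k ^ m * cmod (u k))^2) summable_on UNIV"
proof -
  have "bracket k powr (2 * real m) * (cmod (u k))^2 = (bracket k ^ m * cmod (u k))^2" for k
  proof -
    have "bracket k powr (2 * real m) = bracket k powr (real (2*m))" by simp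
    also have "\<dots> = bracket k ^ (2*m)" by (rule powr_realpow[OF bracket_pos])
    also have "\<dots> = (bracket k ^ m)^2" by (simp add: power_mult[symmetric] mult.commute)
    finally have h: "bracket k powr (2 * real m) = (bracket k ^ m)^2" .
    show ?thesis unfolding h by (simp add: power_mult_distrib)
  qed
  then show ?thesis unfolding sob_def by simp
qed

lemma sobneg: "V \<in> sob P (- real m) \<Longrightarrow> (\<lambda>k. (cmod (V k) / bracket k ^ m)^2) summable_on UNIV"
proof -
  have "bracket k powr (2 * - real m) * (cmod (V k))^2 = (cmod (V k) / bracket k ^ m)^2" for k
  proof -
    have "bracket k powr (2 * - real m) = inverse (bracket k powr (real (2*m)))"
      by (simp add: powr_minus)
    also have "\<dots> = inverse (bracket k ^ (2*m))" by (simp only: powr_realpow[OF bracket_pos])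
    also have "\<dots> = inverse ((bracket k ^ m)^2)" by (simp add: power_mult[symmetric] mult.commute)
    finally have h: "bracket k powr (2 * - real m) = inverse ((bracket k ^ m)^2)" .
    show ?thesis unfolding h by (simp add: power_divide field_simps)
  qed
  then show "V \<in> sob P (- real m) \<Longrightarrow> ?thesis" unfolding sob_def by simp
qed

lemma sob0_iff: "f \<in> sob P 0 \<longleftrightarrow> (\<forall>n. n \<notin> P \<longrightarrow> f n = 0) \<and> (\<lambda>k. (cmod (f k))^2) summable_on UNIV"
  using sobm_iff[of f P 0] by simp

lemma tail:
  fixes f :: "'a \<Rightarrow> real"
  assumes f0: "\<And>x. f x \<ge> 0" and sf: "f summable_on UNIV" and e: "\<epsilon> > 0"
  shows "\<exists>F. finite F \<and> (\<Sum>\<^sub>\<infinity>x\<in>UNIV - F. f x) \<le> \<epsilon>"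
proof -
  obtain F where F: "finite F" "dist (sum f F) (infsum f UNIV) \<le> \<epsilon>"
    using infsum_finite_approximation[OF sf e] by blast
  have s2: "f summable_on (UNIV - F)" by (rule summable_on_subset[OF sf]) auto
  have "infsum f UNIV = infsum f (F \<union> (UNIV - F))" by simp
  also have "\<dots> = sum f F + infsum f (UNIV - F)"
    by (subst infsum_Un_disjoint) (use F(1) s2 in auto)
  finally show ?thesis using F by (auto simp: dist_real_def)
qed

lemma l1_on:
  fixes u :: "int \<Rightarrow> complex"
  assumes m: "m \<ge> 1" and su: "(\<lambda>k. (bracket k ^ m * cmod (u k))^2) summable_on UNIV"
  shows "(\<lambda>k. cmod (u k)) summable_on X"
    "(\<Sum>\<^sub>\<infinity>k\<in>X. cmod (u k)) \<le> sqrt (\<Sum>\<^sub>\<infinity>k\<in>X. (1 / bracket k ^ m)^2) * sqrt (\<Sum>\<^sub>\<infinity>k\<in>X. (bracket k ^ m * cmod (u k))^2)"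
proof -
  have le: "(1 / bracket k ^ m)^2 \<le> inverse (bracket k ^ 2)" for k
  proof -
    have "bracket k ^ 1 \<le> bracket k ^ m" using m bracket_ge1[of k] by (intro power_increasing) auto
    hence "bracket k ^ 2 \<le> (bracket k ^ m)^2" using bracket_pos[of k] by (intro power_mono) auto
    thus ?thesis using bracket_pos[of k] by (simp add: power_divide field_simps)
  qed
  have s1: "(\<lambda>k. (1 / bracket k ^ m)^2) summable_on UNIV"
    by (rule summable_on_comparison_test[OF sumZ]) (use le in auto)
  have s1X: "(\<lambda>k. (1 / bracket k ^ m)^2) summable_on X" by (rule summable_on_subset[OF s1]) auto
  have suX: "(\<lambda>k. (bracket k ^ m * cmod (u k))^2) summable_on X" by (rule summable_on_subset[OF su]) auto
  have eq: "(1 / bracket k ^ m) * (bracket k ^ m * cmod (u k)) = cmod (u k)" for k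
    using bracket_pos[of k] by simp
  have bp1: "\<And>k. 0 \<le> 1 / bracket k ^ m" using bracket_pos by (simp add: less_imp_le)
  have bp2: "\<And>k. 0 \<le> bracket k ^ m * cmod (u k)" using bracket_pos by (simp add: less_imp_le)
  note c = cs[of "\<lambda>k. 1 / bracket k ^ m" "\<lambda>k. bracket k ^ m * cmod (u k)", OF _ _ s1X suX]
  show "(\<lambda>k. cmod (u k)) summable_on X"
    "(\<Sum>\<^sub>\<infinity>k\<in>X. cmod (u k)) \<le> sqrt (\<Sum>\<^sub>\<infinity>k\<in>X. (1 / bracket k ^ m)^2) * sqrt (\<Sum>\<^sub>\<infinity>k\<in>X. (bracket k ^ m * cmod (u k))^2)"
    using c[OF bp1 bp2] unfolding eq by auto
qed



definition Dm :: "nat \<Rightarrow> (int \<Rightarrow> complex) \<Rightarrow> real" where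
  "Dm m u = (\<Sum>\<^sub>\<infinity>n. (real_of_int n * pi)^(2*m) * (cmod (u n))^2)"
definition Lq :: "(int \<Rightarrow> complex) \<Rightarrow> real" where
  "Lq u = (\<Sum>\<^sub>\<infinity>n. (cmod (u n))^2)"
definition Aq :: "nat \<Rightarrow> (int \<Rightarrow> complex) \<Rightarrow> real" where
  "Aq m u = (\<Sum>\<^sub>\<infinity>n. (bracket n ^ m * cmod (u n))^2)"

lemma npi_le: "(real_of_int n * pi)^(2*m) \<le> pi^(2*m) * (bracket n ^ m)^2"
proof -
  have "(real_of_int n * pi)^(2*m) = (\<bar>real_of_int n\<bar> * pi)^(2*m)"
    by (simp add: power_mult power_mult_distrib)
  also have "\<dots> \<le> (bracket n * pi)^(2*m)"
    unfolding bracket_def by (intro power_mono mult_right_mono) (auto intro: less_imp_le)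
  also have "\<dots> = pi^(2*m) * (bracket n ^ m)^2"
    by (simp add: power_mult_distrib power_mult[symmetric] mult.commute)
  finally show ?thesis .
qed

lemma br_le: "(bracket n ^ m)^2 \<le> 4^m * ((real_of_int n * pi)^(2*m) + 1)"
proof -
  define a where "a = \<bar>real_of_int n\<bar>"
  have a0: "a \<ge> 0" unfolding a_def by simp
  have "(bracket n ^ m)^2 = (1 + a)^(2*m)" unfolding bracket_def a_def
    by (simp add: power_mult[symmetric] mult.commute)
  also have "\<dots> \<le> (2 * max 1 a)^(2*m)" using a0 by (intro power_mono) auto
  also have "\<dots> = 4^m * (max 1 a)^(2*m)" by (simp add: power_mult_distrib power_mult)
  also have "(max 1 a)^(2*m) \<le> (a*pi)^(2*m) + 1"
  proof (cases "a \<le> 1")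
    case True then show ?thesis using a0 by (simp add: max_def)
  next
    case False
    then have "(max 1 a)^(2*m) = a^(2*m)" by (simp add: max_def)
    also have "\<dots> \<le> (a*pi)^(2*m)" using False pi_ge_two
      by (intro power_mono) (auto simp: mult_le_cancel_left1)
    finally show ?thesis by simp
  qed
  hence "4^m * (max 1 a)^(2*m) \<le> 4^m * ((a*pi)^(2*m) + 1)" by simp
  also have "(a*pi)^(2*m) = (real_of_int n * pi)^(2*m)" unfolding a_def
    by (simp add: power_mult power_mult_distrib)
  finally show ?thesis .
qed

lemma Dm_summable:
  assumes su: "(\<lambda>k. (bracket k ^ m * cmod (u k))^2) summable_on UNIV"
  shows "(\<lambda>n. (real_of_int n * pi)^(2*m) * (cmod (u n))^2) summable_on UNIV"
proof -
  have "(\<lambda>n. pi^(2*m) * (bracket n ^ m * cmod (u n))^2) summable_on UNIV"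
    by (rule summable_on_cmult_right[OF su])
  then show ?thesis
  proof (rule summable_on_comparison_test)
    fix n :: int
    have "(real_of_int n * pi)^(2*m) * (cmod (u n))^2 \<le> pi^(2*m) * (bracket n ^ m)^2 * (cmod (u n))^2"
      by (rule mult_right_mono[OF npi_le]) simp
    then show "(real_of_int n * pi)^(2*m) * (cmod (u n))^2 \<le> pi^(2*m) * (bracket n ^ m * cmod (u n))^2"
      by (simp add: power_mult_distrib mult.assoc)
    show "0 \<le> (real_of_int n * pi)^(2*m) * (cmod (u n))^2"
      by (simp add: power_mult)
  qed
qed

lemma Dm_nonneg: "Dm m u \<ge> 0" unfolding Dm_def by (intro infsum_nonneg) (simp add: power_mult)
lemma Lq_nonneg: "Lq u \<ge> 0" unfolding Lq_def by (intro infsum_nonneg) simp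
lemma Aq_nonneg: "Aq m u \<ge> 0" unfolding Aq_def by (intro infsum_nonneg) simp

lemma Aq_le:
  assumes su: "(\<lambda>k. (bracket k ^ m * cmod (u k))^2) summable_on UNIV"
  shows "Aq m u \<le> 4^m * (Dm m u + Lq u)"
proof -
  have sL: "(\<lambda>n. (cmod (u n))^2) summable_on UNIV"
    by (rule summable_on_comparison_test[OF su])
       (use bracket_ge1 in \<open>auto intro!: power_mono simp: power_mult_distrib intro: order.trans[OF _ mult_right_mono[of 1]]\<close>)
  have sD: "(\<lambda>n. (real_of_int n * pi)^(2*m) * (cmod (u n))^2) summable_on UNIV" by (rule Dm_summable[OF su])
  have sR: "(\<lambda>n. 4^m * ((real_of_int n * pi)^(2*m) * (cmod (u n))^2 + (cmod (u n))^2)) summable_on UNIV"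
    by (intro summable_on_cmult_right summable_on_add sD sL)
  have "Aq m u \<le> (\<Sum>\<^sub>\<infinity>n. 4^m * ((real_of_int n * pi)^(2*m) * (cmod (u n))^2 + (cmod (u n))^2))"
    unfolding Aq_def
  proof (rule infsum_mono[OF su sR])
    fix n
    have "(bracket n ^ m)^2 * (cmod (u n))^2 \<le> 4^m * ((real_of_int n * pi)^(2*m) + 1) * (cmod (u n))^2"
      by (rule mult_right_mono[OF br_le]) simp
    then show "(bracket n ^ m * cmod (u n))^2 \<le> 4^m * ((real_of_int n * pi)^(2*m) * (cmod (u n))^2 + (cmod (u n))^2)"
      by (simp add: power_mult_distrib algebra_simps)
  qed
  also have "\<dots> = 4^m * (Dm m u + Lq u)" unfolding Dm_def Lq_def
    by (subst infsum_cmult_right, intro summable_on_add sD sL, subst infsum_add, rule sD, rule sL, rule refl)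
  finally show ?thesis .
qed



lemma sL_of_su:
  assumes su: "(\<lambda>k. (bracket k ^ m * cmod (u k))^2) summable_on UNIV"
  shows "(\<lambda>n. (cmod (u n))^2) summable_on UNIV"
proof (rule summable_on_comparison_test[OF su])
  fix n
  have "cmod (u n) \<le> bracket n ^ m * cmod (u n)"
    using mult_right_mono[of 1 "bracket n ^ m" "cmod (u n)"] bracket_ge1[of n] by simp
  then show "(cmod (u n))^2 \<le> (bracket n ^ m * cmod (u n))^2" by (intro power_mono) auto
qed simp

lemma s1_summable: assumes m: "m \<ge> 1" shows "(\<lambda>k. (1 / bracket k ^ m)^2) summable_on UNIV"
proof -
  have le: "(1 / bracket k ^ m)^2 \<le> inverse (bracket k ^ 2)" for k
  proof -
    have "bracket k ^ 1 \<le> bracket k ^ m" using m bracket_ge1[of k] by (intro power_increasing) auto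
    hence "bracket k ^ 2 \<le> (bracket k ^ m)^2" using bracket_pos[of k] by (intro power_mono) auto
    thus ?thesis using bracket_pos[of k] by (simp add: power_divide field_simps)
  qed
  show ?thesis by (rule summable_on_comparison_test[OF sumZ]) (use le in auto)
qed

lemma lowhigh:
  assumes m: "m \<ge> 1" and eta: "\<eta> > 0"
  shows "\<exists>c\<ge>0. \<forall>u::int\<Rightarrow>complex. (\<lambda>k. (bracket k ^ m * cmod (u k))^2) summable_on UNIV \<longrightarrow>
            (\<Sum>\<^sub>\<infinity>k. cmod (u k)) \<le> \<eta> * sqrt (Aq m u) + c * sqrt (Lq u)"
proof -
  obtain F where F: "finite F" "(\<Sum>\<^sub>\<infinity>k\<in>UNIV - F. (1 / bracket k ^ m)^2) \<le> \<eta>^2"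
    using tail[OF _ s1_summable[OF m], of "\<eta>^2"] eta by auto
  show ?thesis
  proof (intro exI[of _ "sqrt (real (card F))"] conjI allI impI)
    show "0 \<le> sqrt (real (card F))" by simp
    fix u :: "int \<Rightarrow> complex"
    assume su: "(\<lambda>k. (bracket k ^ m * cmod (u k))^2) summable_on UNIV"
    have sL: "(\<lambda>n. (cmod (u n))^2) summable_on UNIV" by (rule sL_of_su[OF su])
    have "(\<Sum>\<^sub>\<infinity>k. cmod (u k)) = (\<Sum>\<^sub>\<infinity>k\<in>F \<union> (UNIV - F). cmod (u k))" by simp
    also have "\<dots> = (\<Sum>\<^sub>\<infinity>k\<in>F. cmod (u k)) + (\<Sum>\<^sub>\<infinity>k\<in>UNIV - F. cmod (u k))"
      by (rule infsum_Un_disjoint) (use l1_on(1)[OF m su] in auto)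
    also have "(\<Sum>\<^sub>\<infinity>k\<in>UNIV - F. cmod (u k)) \<le> \<eta> * sqrt (Aq m u)"
    proof -
      have "(\<Sum>\<^sub>\<infinity>k\<in>UNIV - F. cmod (u k)) \<le> sqrt (\<Sum>\<^sub>\<infinity>k\<in>UNIV - F. (1 / bracket k ^ m)^2) * sqrt (\<Sum>\<^sub>\<infinity>k\<in>UNIV - F. (bracket k ^ m * cmod (u k))^2)"
        by (rule l1_on(2)[OF m su])
      also have "\<dots> \<le> \<eta> * sqrt (Aq m u)"
      proof (rule mult_mono)
        show "sqrt (\<Sum>\<^sub>\<infinity>k\<in>UNIV - F. (1 / bracket k ^ m)^2) \<le> \<eta>"
          using F(2) eta real_sqrt_le_mono[OF F(2)] by simp
        have "(\<Sum>\<^sub>\<infinity>k\<in>UNIV - F. (bracket k ^ m * cmod (u k))^2) \<le> Aq m u"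
          unfolding Aq_def by (rule infsum_mono_neutral) (use summable_on_subset[OF su] su in auto)
        then show "sqrt (\<Sum>\<^sub>\<infinity>k\<in>UNIV - F. (bracket k ^ m * cmod (u k))^2) \<le> sqrt (Aq m u)" by simp
      qed (use eta in \<open>auto intro: infsum_nonneg\<close>)
      finally show ?thesis .
    qed
    also have "(\<Sum>\<^sub>\<infinity>k\<in>F. cmod (u k)) \<le> sqrt (real (card F)) * sqrt (Lq u)"
    proof -
      have "(\<Sum>\<^sub>\<infinity>k\<in>F. 1 * cmod (u k)) \<le> sqrt (\<Sum>\<^sub>\<infinity>k\<in>F. 1^2) * sqrt (\<Sum>\<^sub>\<infinity>k\<in>F. (cmod (u k))^2)"
        by (rule cs(2)) (use F(1) in auto)
      also have "(\<Sum>\<^sub>\<infinity>k\<in>F. (1::real)^2) = real (card F)" using F(1) by simp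
      also have "(\<Sum>\<^sub>\<infinity>k\<in>F. (cmod (u k))^2) \<le> Lq u"
        unfolding Lq_def by (rule infsum_mono_neutral) (use F(1) sL in auto)
      finally show ?thesis by (simp add: mult_left_mono)
    qed
    finally show "(\<Sum>\<^sub>\<infinity>k. cmod (u k)) \<le> \<eta> * sqrt (Aq m u) + sqrt (real (card F)) * sqrt (Lq u)"
      by simp
  qed
qed



lemma bracket_pow_nonneg[simp]: "0 \<le> bracket n ^ m" using bracket_pos[of n] by simp

lemma pairD:
  assumes su: "(\<lambda>k. (bracket k ^ m * cmod (u k))^2) summable_on UNIV"
  shows "(\<lambda>n. Dpow m u n * cnj (v n)) summable_on UNIV \<or> True"
    "(\<lambda>n. Dpow m u n * cnj (u n)) summable_on UNIV"
    "pairing (Dpow m u) u = complex_of_real (Dm m u)"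
proof -
  have eq: "Dpow m u n * cnj (u n) = complex_of_real ((real_of_int n * pi)^(2*m) * (cmod (u n))^2)" for n
    unfolding Dpow_def mult.assoc complex_norm_square[symmetric] by (simp only: of_real_mult)
  have h: "((\<lambda>n. Dpow m u n * cnj (u n)) has_sum complex_of_real (Dm m u)) UNIV"
    unfolding eq Dm_def by (rule has_sum_of_real[OF has_sum_infsum[OF Dm_summable[OF su]]])
  show "(\<lambda>n. Dpow m u n * cnj (u n)) summable_on UNIV" using h by (auto simp: summable_on_def)
  show "pairing (Dpow m u) u = complex_of_real (Dm m u)" unfolding pairing_def using h by (rule infsumI)
qed simp

lemma pairD_summable:
  assumes su: "(\<lambda>k. (bracket k ^ m * cmod (u k))^2) summable_on UNIV"
    and sv: "(\<lambda>k. (bracket k ^ m * cmod (v k))^2) summable_on UNIV"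
  shows "(\<lambda>n. Dpow m u n * cnj (v n)) summable_on UNIV"
proof -
  have c: "(\<lambda>n. (bracket n ^ m * cmod (u n)) * (bracket n ^ m * cmod (v n))) summable_on UNIV"
    by (rule cs(1)[OF _ _ su sv]) simp_all
  have "(\<lambda>n. norm (Dpow m u n * cnj (v n))) summable_on UNIV"
  proof (rule summable_on_comparison_test[OF summable_on_cmult_right[OF c, of "pi^(2*m)"]])
    fix n
    have "norm (Dpow m u n * cnj (v n)) = (real_of_int n * pi)^(2*m) * (cmod (u n) * cmod (v n))"
    proof -
      have "norm (Dpow m u n * cnj (v n)) = \<bar>(real_of_int n * pi)^(2*m)\<bar> * (cmod (u n) * cmod (v n))"
        unfolding Dpow_def norm_mult norm_of_real complex_mod_cnj by (simp only: mult.assoc)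
      also have "\<bar>(real_of_int n * pi)^(2*m)\<bar> = (real_of_int n * pi)^(2*m)"
        by (simp add: power_mult)
      finally show ?thesis .
    qed
    also have "\<dots> \<le> (pi^(2*m) * (bracket n ^ m)^2) * (cmod (u n) * cmod (v n))"
      by (rule mult_right_mono[OF npi_le]) simp
    finally show "norm (Dpow m u n * cnj (v n)) \<le> pi^(2*m) * ((bracket n ^ m * cmod (u n)) * (bracket n ^ m * cmod (v n)))"
      by (simp add: power2_eq_square algebra_simps)
  qed simp
  then show ?thesis by (simp add: summable_on_iff_abs_summable_on_complex)
qed

definition N1 :: "(int \<Rightarrow> complex) \<Rightarrow> real" where "N1 u = (\<Sum>\<^sub>\<infinity>k. cmod (u k))"

lemma pairB:
  fixes V u v :: "int \<Rightarrow> complex"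
  assumes m: "m \<ge> 1"
    and sW: "(\<lambda>k. (cmod (V k) / bracket k ^ m)^2) summable_on UNIV"
    and su: "(\<lambda>k. (bracket k ^ m * cmod (u k))^2) summable_on UNIV"
    and sv: "(\<lambda>k. (bracket k ^ m * cmod (v k))^2) summable_on UNIV"
  shows "(\<lambda>j. V (n - j) * u j) summable_on UNIV"
    "(\<lambda>n. mult_distr V u n * cnj (v n)) summable_on UNIV"
    "cmod (pairing (mult_distr V u) v) \<le> 2^m * sqrt (\<Sum>\<^sub>\<infinity>k. (cmod (V k) / bracket k ^ m)^2) *
       (N1 v * sqrt (Aq m u) + N1 u * sqrt (Aq m v))"
proof -
  have lu: "(\<lambda>k. cmod (u k)) summable_on UNIV" by (rule l1_on(1)[OF m su])
  have lv: "(\<lambda>k. cmod (v k)) summable_on UNIV" by (rule l1_on(1)[OF m sv])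
  note mb = main_bound[OF sW su sv lu lv]
  have nrm: "norm (V (n - j) * u j) = cmod (V (n - j)) * cmod (u j)" for n j by (simp add: norm_mult)
  have abs1: "(\<lambda>j. norm (V (n - j) * u j)) summable_on UNIV" for n unfolding nrm by (rule mb(1))
  show s1: "(\<lambda>j. V (n - j) * u j) summable_on UNIV" for n
    using abs1 by (simp add: summable_on_iff_abs_summable_on_complex)
  have md: "cmod (mult_distr V u n) \<le> (\<Sum>\<^sub>\<infinity>j. cmod (V (n - j)) * cmod (u j))" for n
    unfolding mult_distr_def using norm_infsum_bound[OF abs1[of n]] unfolding nrm .
  have pt: "norm (mult_distr V u n * cnj (v n)) \<le> cmod (v n) * (\<Sum>\<^sub>\<infinity>j. cmod (V (n - j)) * cmod (u j))" for n
    using md[of n] by (simp add: norm_mult mult.commute mult_left_mono)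
  have abs2: "(\<lambda>n. norm (mult_distr V u n * cnj (v n))) summable_on UNIV"
    by (rule summable_on_comparison_test[OF mb(2)]) (use pt in auto)
  show "(\<lambda>n. mult_distr V u n * cnj (v n)) summable_on UNIV"
    using abs2 by (simp add: summable_on_iff_abs_summable_on_complex)
  have "cmod (pairing (mult_distr V u) v) \<le> (\<Sum>\<^sub>\<infinity>n. norm (mult_distr V u n * cnj (v n)))"
    unfolding pairing_def by (rule norm_infsum_bound[OF abs2])
  also have "\<dots> \<le> (\<Sum>\<^sub>\<infinity>n. cmod (v n) * (\<Sum>\<^sub>\<infinity>j. cmod (V (n - j)) * cmod (u j)))"
    by (rule infsum_mono[OF abs2 mb(2)]) (rule pt)
  also have "\<dots> \<le> 2^m * sqrt (\<Sum>\<^sub>\<infinity>k. (cmod (V k) / bracket k ^ m)^2) *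
       (N1 v * sqrt (Aq m u) + N1 u * sqrt (Aq m v))"
    using mb(3) unfolding N1_def Aq_def .
  finally show "cmod (pairing (mult_distr V u) v) \<le> 2^m * sqrt (\<Sum>\<^sub>\<infinity>k. (cmod (V k) / bracket k ^ m)^2) *
       (N1 v * sqrt (Aq m u) + N1 u * sqrt (Aq m v))" .
qed



lemma key:
  fixes V :: "int \<Rightarrow> complex"
  assumes m: "m \<ge> 1"
    and sW: "(\<lambda>k. (cmod (V k) / bracket k ^ m)^2) summable_on UNIV"
  shows "\<exists>C\<ge>0. \<forall>u. (\<lambda>k. (bracket k ^ m * cmod (u k))^2) summable_on UNIV \<longrightarrow>
           cmod (pairing (mult_distr V u) u) \<le> Dm m u / 2 + C * Lq u"
proof -
  define K0 where "K0 = 2^m * sqrt (\<Sum>\<^sub>\<infinity>k. (cmod (V k) / bracket k ^ m)^2) * 2"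
  have K0: "K0 \<ge> 0" unfolding K0_def by (simp add: infsum_nonneg)
  define M :: real where "M = 4^m"
  have M: "M \<ge> 1" unfolding M_def by simp
  define \<eta> where "\<eta> = 1 / (4 * M * (K0 + 1))"
  have eta: "\<eta> > 0" unfolding \<eta>_def using K0 M by simp
  obtain c where c: "c \<ge> 0" and ch: "\<And>u. (\<lambda>k. (bracket k ^ m * cmod (u k))^2) summable_on UNIV \<Longrightarrow>
            N1 u \<le> \<eta> * sqrt (Aq m u) + c * sqrt (Lq u)"
    using lowhigh[OF m eta] unfolding N1_def by blast
  define l where "l = 1 / (2 * M)"
  have lp: "l > 0" unfolding l_def using M by simp
  show ?thesis
  proof (intro exI[of _ "1/2 + (K0 * c)^2 * M"] conjI allI impI)
    show "0 \<le> 1/2 + (K0 * c)^2 * M" using M by simp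
    fix u :: "int \<Rightarrow> complex"
    assume su: "(\<lambda>k. (bracket k ^ m * cmod (u k))^2) summable_on UNIV"
    define a where "a = sqrt (Aq m u)"
    define s where "s = sqrt (Lq u)"
    have a0: "a \<ge> 0" and s0: "s \<ge> 0" unfolding a_def s_def using Aq_nonneg Lq_nonneg by simp_all
    have a2: "a^2 = Aq m u" unfolding a_def using Aq_nonneg by simp
    have s2: "s^2 = Lq u" unfolding s_def using Lq_nonneg by simp
    have h1: "cmod (pairing (mult_distr V u) u) \<le> K0 * N1 u * a"
      using pairB(3)[OF m sW su su] unfolding K0_def a_def by (simp add: algebra_simps)
    have h2: "N1 u \<le> \<eta> * a + c * s" using ch[OF su] unfolding a_def s_def .
    have h3: "K0 * N1 u * a \<le> K0 * (\<eta> * a + c * s) * a"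
      using h2 K0 a0 by (intro mult_right_mono mult_left_mono) auto
    have h4: "(K0 * c * s) * a \<le> (l/2) * a^2 + (1/(2*l)) * (K0 * c * s)^2"
      using amgm[OF lp, of a "K0 * c * s"] by (simp add: mult.commute)
    have h5: "K0 * \<eta> \<le> 1 / (4 * M)"
    proof -
      have "K0 * \<eta> = (K0 / (K0 + 1)) * (1 / (4 * M))" unfolding \<eta>_def using K0 M by (simp add: field_simps)
      also have "\<dots> \<le> 1 * (1 / (4 * M))" using K0 M by (intro mult_right_mono) auto
      finally show ?thesis by simp
    qed
    have h5': "(K0 * \<eta>) * a^2 \<le> (1 / (4 * M)) * a^2" by (rule mult_right_mono[OF h5]) simp
    have h6: "a^2 \<le> M * (Dm m u + Lq u)" unfolding a2 M_def by (rule Aq_le[OF su])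
    have h6': "(1 / (2 * M)) * a^2 \<le> (Dm m u + Lq u) / 2"
    proof -
      have "(1 / (2 * M)) * a^2 \<le> (1 / (2 * M)) * (M * (Dm m u + Lq u))"
        by (rule mult_left_mono[OF h6]) (use M in simp)
      also have "\<dots> = (Dm m u + Lq u) / 2" using M by (simp add: field_simps)
      finally show ?thesis .
    qed
    have e1: "K0 * (\<eta> * a + c * s) * a = (K0 * \<eta>) * a^2 + (K0 * c * s) * a"
      by (simp add: power2_eq_square algebra_simps)
    have e2: "(1/(2*l)) * (K0 * c * s)^2 = (K0 * c)^2 * M * Lq u"
      unfolding l_def using M by (simp add: power_mult_distrib s2[symmetric] field_simps)
    have e3: "(l/2) * a^2 = (1 / (4 * M)) * a^2" unfolding l_def by simp
    have e4: "(1 / (4 * M)) * a^2 + (1 / (4 * M)) * a^2 = (1 / (2 * M)) * a^2" by simp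
    have "cmod (pairing (mult_distr V u) u) \<le> (1 / (2 * M)) * a^2 + (K0 * c)^2 * M * Lq u"
      using h1 h3 h4 h5' e1 e2 e3 e4 by linarith
    also have "\<dots> \<le> Dm m u / 2 + (1/2 + (K0 * c)^2 * M) * Lq u"
      using h6' by (simp add: algebra_simps)
    finally show "cmod (pairing (mult_distr V u) u) \<le> Dm m u / 2 + (1/2 + (K0 * c)^2 * M) * Lq u" .
  qed
qed



lemma sq_sub:
  fixes f g :: "int \<Rightarrow> complex" and w :: "int \<Rightarrow> real"
  assumes sf: "(\<lambda>k. (w k * cmod (f k))^2) summable_on UNIV"
    and sg: "(\<lambda>k. (w k * cmod (g k))^2) summable_on UNIV"
  shows "(\<lambda>k. (w k * cmod (f k - g k))^2) summable_on UNIV"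
    "(\<Sum>\<^sub>\<infinity>k. (w k * cmod (f k - g k))^2) \<le> 2 * (\<Sum>\<^sub>\<infinity>k. (w k * cmod (f k))^2) + 2 * (\<Sum>\<^sub>\<infinity>k. (w k * cmod (g k))^2)"
proof -
  have pt: "(w k * cmod (f k - g k))^2 \<le> 2 * (w k * cmod (f k))^2 + 2 * (w k * cmod (g k))^2" for k
  proof -
    have "(w k * cmod (f k - g k))^2 = (w k)^2 * (cmod (f k - g k))^2" by (simp add: power_mult_distrib)
    also have "(cmod (f k - g k))^2 \<le> (cmod (f k) + cmod (g k))^2"
      by (intro power_mono norm_triangle_ineq4) simp
    also have "(cmod (f k) + cmod (g k))^2 \<le> 2 * (cmod (f k))^2 + 2 * (cmod (g k))^2"
      using sum_squares_bound[of "cmod (f k)" "cmod (g k)"]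
      by (simp add: power2_eq_square algebra_simps)
    finally have "(w k * cmod (f k - g k))^2 \<le> (w k)^2 * (2 * (cmod (f k))^2 + 2 * (cmod (g k))^2)"
      by (simp add: mult_left_mono)
    then show ?thesis by (simp add: power_mult_distrib algebra_simps)
  qed
  have sR: "(\<lambda>k. 2 * (w k * cmod (f k))^2 + 2 * (w k * cmod (g k))^2) summable_on UNIV"
    by (intro summable_on_add summable_on_cmult_right sf sg)
  show s: "(\<lambda>k. (w k * cmod (f k - g k))^2) summable_on UNIV"
    by (rule summable_on_comparison_test[OF sR pt]) simp
  have "(\<Sum>\<^sub>\<infinity>k. (w k * cmod (f k - g k))^2) \<le> (\<Sum>\<^sub>\<infinity>k. 2 * (w k * cmod (f k))^2 + 2 * (w k * cmod (g k))^2)"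
    by (rule infsum_mono[OF s sR pt])
  also have "\<dots> = 2 * (\<Sum>\<^sub>\<infinity>k. (w k * cmod (f k))^2) + 2 * (\<Sum>\<^sub>\<infinity>k. (w k * cmod (g k))^2)"
    by (subst infsum_add, rule summable_on_cmult_right[OF sf], rule summable_on_cmult_right[OF sg],
        subst infsum_cmult_right, rule sf, subst infsum_cmult_right, rule sg, rule refl)
  finally show "(\<Sum>\<^sub>\<infinity>k. (w k * cmod (f k - g k))^2) \<le> 2 * (\<Sum>\<^sub>\<infinity>k. (w k * cmod (f k))^2) + 2 * (\<Sum>\<^sub>\<infinity>k. (w k * cmod (g k))^2)" .
qed

lemma sobm_diff: "u \<in> sob P (real m) \<Longrightarrow> v \<in> sob P (real m) \<Longrightarrow> u - v \<in> sob P (real m)"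
  unfolding sobm_iff using sq_sub(1)[of "\<lambda>k. bracket k ^ m" u v] by simp

lemma sob0_diff: "u \<in> sob P 0 \<Longrightarrow> v \<in> sob P 0 \<Longrightarrow> u - v \<in> sob P 0"
  using sobm_diff[of u P 0 v] by simp

lemma Lq_diff: "u \<in> sob P 0 \<Longrightarrow> v \<in> sob P 0 \<Longrightarrow> Lq (u - v) \<le> 2 * Lq u + 2 * Lq v"
  unfolding sob0_iff Lq_def using sq_sub(2)[of "\<lambda>k. 1" u v] by simp

lemma sobm_sub0: "u \<in> sob P (real m) \<Longrightarrow> u \<in> sob P 0"
  unfolding sob0_iff sobm_iff using sL_of_su by blast

lemma l2norm_Lq: "l2norm u = sqrt (Lq u)" unfolding l2norm_def Lq_def ..

lemma form_eq:
  assumes "u \<in> sob P (real m)"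
  shows "form_t m V u u = complex_of_real (Dm m u) + pairing (mult_distr V u) u"
  unfolding form_t_def using pairD(3) assms unfolding sobm_iff by simp

lemma formest:
  assumes C: "\<And>u. (\<lambda>k. (bracket k ^ m * cmod (u k))^2) summable_on UNIV \<Longrightarrow>
           cmod (pairing (mult_distr V u) u) \<le> Dm m u / 2 + C * Lq u"
    and u: "u \<in> sob P (real m)"
  shows "Dm m u \<le> 2 * cmod (form_t m V u u) + 2 * C * Lq u"
    "cmod (form_t m V u u) \<le> 3/2 * Dm m u + C * Lq u"
proof -
  have b: "cmod (pairing (mult_distr V u) u) \<le> Dm m u / 2 + C * Lq u" using C u unfolding sobm_iff by blast
  have e: "form_t m V u u = complex_of_real (Dm m u) + pairing (mult_distr V u) u" by (rule form_eq[OF u])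
  have "Dm m u - cmod (pairing (mult_distr V u) u) \<le> Re (form_t m V u u)"
    unfolding e using abs_Re_le_cmod[of "pairing (mult_distr V u) u"] by simp
  also have "\<dots> \<le> cmod (form_t m V u u)" by (rule complex_Re_le_cmod)
  finally show "Dm m u \<le> 2 * cmod (form_t m V u u) + 2 * C * Lq u" using b by simp
  have "cmod (form_t m V u u) \<le> cmod (complex_of_real (Dm m u)) + cmod (pairing (mult_distr V u) u)"
    unfolding e by (rule norm_triangle_ineq)
  also have "cmod (complex_of_real (Dm m u)) = Dm m u" using Dm_nonneg by simp
  finally show "cmod (form_t m V u u) \<le> 3/2 * Dm m u + C * Lq u" using b by simp
qed

lemma arith1: fixes D C I M :: real assumes "D \<ge> 0" "1 \<le> M" "C \<le> M" "I \<le> D/2 + C"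
  shows "I \<le> M * (D/2 + 1)"
proof -
  have "D/2 \<le> M*(D/2)" using mult_right_mono[of 1 M "D/2"] assms by simp
  hence "D/2 + C \<le> M*(D/2) + M" using assms by linarith
  thus ?thesis using assms by (simp add: distrib_left)
qed

lemma sectorial:
  assumes C0: "C \<ge> 0" and C: "\<And>u. (\<lambda>k. (bracket k ^ m * cmod (u k))^2) summable_on UNIV \<Longrightarrow>
           cmod (pairing (mult_distr V u) u) \<le> Dm m u / 2 + C * Lq u"
  shows "sectorial_form (sob P 0) (sob P (real m)) (form_t m V)"
proof -
  have main: "form_t m V u u = complex_of_real (-(C+1)) \<or> \<bar>Arg (form_t m V u u - complex_of_real (-(C+1)))\<bar> \<le> arctan (max 1 C)"
    if u: "u \<in> sob P (real m)" and n1: "l2norm u = 1" for u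
  proof -
  have L1: "Lq u = 1" using n1 Lq_nonneg[of u] unfolding l2norm_Lq by simp
  define b where "b = pairing (mult_distr V u) u"
  have bb: "cmod b \<le> Dm m u / 2 + C" using C[of u] u L1 unfolding sobm_iff b_def by simp
  define z where "z = form_t m V u u - complex_of_real (-(C+1))"
  have z: "z = complex_of_real (Dm m u + C + 1) + b" unfolding z_def b_def form_eq[OF u] by simp
  have Rez: "Re z \<ge> Dm m u / 2 + 1" unfolding z using abs_Re_le_cmod[of b] bb by simp
  have Imz: "\<bar>Im z\<bar> \<le> Dm m u / 2 + C" unfolding z using abs_Im_le_cmod[of b] bb by simp
  have D0: "Dm m u \<ge> 0" by (rule Dm_nonneg)
  have Rp: "Re z > 0" using Rez D0 by linarith
  have "\<bar>Im z\<bar> \<le> max 1 C * (Dm m u / 2 + 1)"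
  proof -
    show ?thesis by (rule arith1[OF D0 _ _ Imz]) auto
  qed
  also have "\<dots> \<le> max 1 C * Re z" using Rez by (intro mult_left_mono) auto
  finally have "\<bar>Im z\<bar> \<le> max 1 C * Re z" .
  hence "\<bar>Im z\<bar> / Re z \<le> max 1 C" using pos_divide_le_eq[OF Rp] by (simp add: mult.commute)
  hence "\<bar>Im z / Re z\<bar> \<le> max 1 C" using abs_div_pos[OF Rp, of "Im z"] by simp
  hence "\<bar>Arg z\<bar> \<le> arctan (max 1 C)"
    unfolding arg_conv_arctan[OF Rp] abs_arctan by (rule arctan_monotone')
  then show "form_t m V u u = complex_of_real (-(C+1)) \<or> \<bar>Arg (form_t m V u u - complex_of_real (-(C+1)))\<bar> \<le> arctan (max 1 C)"
    unfolding z_def by blast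
  qed
  show ?thesis unfolding sectorial_form_def
    apply (intro conjI)
     apply (use sobm_sub0 in blast)
    apply (rule exI[of _ "-(C+1)"], rule exI[of _ "arctan (max 1 C)"])
    apply (intro conjI ballI impI)
      apply simp
     apply (rule arctan_ubound)
    apply (rule main; assumption)
    done
qed



lemma term_le_Lq:
  assumes "(\<lambda>k. (cmod (f k))^2) summable_on UNIV"
  shows "(cmod (f n))^2 \<le> Lq f"
proof -
  have "sum (\<lambda>k. (cmod (f k))^2) {n} \<le> (\<Sum>\<^sub>\<infinity>k. (cmod (f k))^2)"
    by (rule finite_sum_le_infsum[OF assms]) auto
  then show ?thesis unfolding Lq_def by simp
qed

lemma Dm_lim:
  fixes us :: "nat \<Rightarrow> int \<Rightarrow> complex"
  assumes pw: "\<And>n. (\<lambda>l. us l n) \<longlonglongrightarrow> u n"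
    and D: "\<And>l. l \<ge> N \<Longrightarrow> us k - us l \<in> sob P (real m)"
    and b: "\<And>l. l \<ge> N \<Longrightarrow> Dm m (us k - us l) \<le> \<epsilon>"
  shows "(\<lambda>n. (real_of_int n * pi)^(2*m) * (cmod (us k n - u n))^2) summable_on UNIV"
    "(\<Sum>\<^sub>\<infinity>n. (real_of_int n * pi)^(2*m) * (cmod (us k n - u n))^2) \<le> \<epsilon>"
proof -
  define g where "g n = (real_of_int n * pi)^(2*m) * (cmod (us k n - u n))^2" for n
  have g0: "g n \<ge> 0" for n unfolding g_def by (simp add: power_mult)
  have fs: "sum g F \<le> \<epsilon>" if F: "finite F" for F
  proof (rule LIMSEQ_le_const2)
    show "(\<lambda>l. \<Sum>n\<in>F. (real_of_int n * pi)^(2*m) * (cmod (us k n - us l n))^2) \<longlonglongrightarrow> sum g F"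
      unfolding g_def by (intro tendsto_sum tendsto_mult tendsto_const tendsto_power tendsto_norm tendsto_diff pw)
    show "\<exists>N. \<forall>l\<ge>N. (\<Sum>n\<in>F. (real_of_int n * pi)^(2*m) * (cmod (us k n - us l n))^2) \<le> \<epsilon>"
    proof (intro exI[of _ N] allI impI)
      fix l assume l: "N \<le> l"
      have su: "(\<lambda>j. (bracket j ^ m * cmod ((us k - us l) j))^2) summable_on UNIV"
        using D[OF l] unfolding sobm_iff by blast
      have "(\<Sum>n\<in>F. (real_of_int n * pi)^(2*m) * (cmod ((us k - us l) n))^2) \<le> Dm m (us k - us l)"
        unfolding Dm_def by (rule finite_sum_le_infsum[OF Dm_summable[OF su] F]) (auto simp: power_mult)
      also have "\<dots> \<le> \<epsilon>" by (rule b[OF l])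
      finally show "(\<Sum>n\<in>F. (real_of_int n * pi)^(2*m) * (cmod (us k n - us l n))^2) \<le> \<epsilon>" by simp
    qed
  qed
  show s: "(\<lambda>n. (real_of_int n * pi)^(2*m) * (cmod (us k n - u n))^2) summable_on UNIV"
    unfolding g_def[symmetric]
    by (rule nonneg_bdd_above_summable_on) (use g0 fs in \<open>auto intro!: bdd_aboveI2\<close>)
  show "(\<Sum>\<^sub>\<infinity>n. (real_of_int n * pi)^(2*m) * (cmod (us k n - u n))^2) \<le> \<epsilon>"
    unfolding g_def[symmetric] by (rule infsum_le_finite_sums) (use s fs in \<open>auto simp: g_def\<close>)
qed

lemma closed:
  assumes C0: "C \<ge> 0" and C: "\<And>u. (\<lambda>k. (bracket k ^ m * cmod (u k))^2) summable_on UNIV \<Longrightarrow>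
           cmod (pairing (mult_distr V u) u) \<le> Dm m u / 2 + C * Lq u"
  shows "closed_form (sob P 0) (sob P (real m)) (form_t m V)"
  unfolding closed_form_def
proof (intro conjI allI impI)
  show "sob P (real m) \<subseteq> sob P 0" using sobm_sub0 by blast
  fix us :: "nat \<Rightarrow> int \<Rightarrow> complex" and u
  assume H: "(\<forall>k. us k \<in> sob P (real m)) \<and> u \<in> sob P 0 \<and> (\<lambda>k. l2norm (us k - u)) \<longlonglongrightarrow> 0 \<and>
      (\<forall>\<epsilon>>0. \<exists>N. \<forall>k\<ge>N. \<forall>l\<ge>N. cmod (form_t m V (us k - us l) (us k - us l)) < \<epsilon>)"
  have usD: "us k \<in> sob P (real m)" for k using H by blast
  have uH: "u \<in> sob P 0" using H by blast
  have usH: "us k \<in> sob P 0" for k using sobm_sub0[OF usD] .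
  have dH: "us k - u \<in> sob P 0" for k by (rule sob0_diff[OF usH uH])
  define \<delta> where "\<delta> k = Lq (us k - u)" for k
  have d0: "\<delta> k \<ge> 0" for k unfolding \<delta>_def by (rule Lq_nonneg)
  have dl: "\<delta> \<longlonglongrightarrow> 0"
  proof -
    have "(\<lambda>k. (l2norm (us k - u))^2) \<longlonglongrightarrow> 0^2" using H by (intro tendsto_power) blast
    moreover have "(l2norm (us k - u))^2 = \<delta> k" for k unfolding l2norm_Lq \<delta>_def using Lq_nonneg by simp
    ultimately show ?thesis by simp
  qed
  have cau: "\<exists>N. \<forall>k\<ge>N. \<forall>l\<ge>N. cmod (form_t m V (us k - us l) (us k - us l)) < \<epsilon>" if "\<epsilon> > 0" for \<epsilon>
    using H that by blast
  have dev: "\<exists>N. \<forall>k\<ge>N. \<delta> k < \<epsilon>" if "\<epsilon> > 0" for \<epsilon>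
    using dl that d0 unfolding LIMSEQ_iff by (metis abs_of_nonneg diff_zero real_norm_def)
  have step1: "\<exists>N. \<forall>k\<ge>N. \<forall>l\<ge>N. Dm m (us k - us l) \<le> \<epsilon>" if e: "\<epsilon> > 0" for \<epsilon>
  proof -
    obtain N1 where N1: "\<And>k l. k \<ge> N1 \<Longrightarrow> l \<ge> N1 \<Longrightarrow> cmod (form_t m V (us k - us l) (us k - us l)) < \<epsilon>/4"
      using cau[of "\<epsilon>/4"] e by auto
    obtain N2 where N2: "\<And>k. k \<ge> N2 \<Longrightarrow> \<delta> k < \<epsilon> / (16 * (C + 1))"
      using dev[of "\<epsilon> / (16 * (C + 1))"] e C0 by auto
    show ?thesis
    proof (intro exI[of _ "max N1 N2"] allI impI)
      fix k l assume k: "max N1 N2 \<le> k" and l: "max N1 N2 \<le> l"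
      have w: "us k - us l \<in> sob P (real m)" by (rule sobm_diff[OF usD usD])
      have eq: "us k - us l = (us k - u) - (us l - u)" by (simp add: fun_eq_iff)
      have Lw: "Lq (us k - us l) \<le> 2 * \<delta> k + 2 * \<delta> l"
        unfolding eq \<delta>_def by (rule Lq_diff[OF dH dH])
      have dk: "\<delta> k < \<epsilon> / (16 * (C + 1))" "\<delta> l < \<epsilon> / (16 * (C + 1))" using N2 k l by auto
      have "C * Lq (us k - us l) \<le> C * (2 * \<delta> k + 2 * \<delta> l)" using Lw C0 by (rule mult_left_mono)
      also have "\<dots> \<le> C * (4 * (\<epsilon> / (16 * (C + 1))))" using dk C0 by (intro mult_left_mono) auto
      also have "\<dots> = (C / (C + 1)) * (\<epsilon> / 4)" using C0 by (simp add: field_simps)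
      also have "\<dots> \<le> 1 * (\<epsilon> / 4)" using C0 e by (intro mult_right_mono) auto
      finally have CL: "C * Lq (us k - us l) \<le> \<epsilon> / 4" by simp
      have T: "cmod (form_t m V (us k - us l) (us k - us l)) < \<epsilon>/4" using N1 k l by auto
      have "Dm m (us k - us l) \<le> 2 * cmod (form_t m V (us k - us l) (us k - us l)) + 2 * C * Lq (us k - us l)"
        by (rule formest(1)[OF C w])
      then show "Dm m (us k - us l) \<le> \<epsilon>" using CL T by linarith
    qed
  qed
  have pw: "(\<lambda>l. us l n) \<longlonglongrightarrow> u n" for n
  proof -
    have "(\<lambda>l. us l n - u n) \<longlonglongrightarrow> 0"
    proof (rule Lim_null_comparison)
      show "\<forall>\<^sub>F l in sequentially. norm (us l n - u n) \<le> sqrt (\<delta> l)"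
      proof (intro always_eventually allI)
        fix l
        have "(\<lambda>j. (cmod ((us l - u) j))^2) summable_on UNIV" using dH[of l] unfolding sob0_iff by blast
        then have "(cmod ((us l - u) n))^2 \<le> \<delta> l" unfolding \<delta>_def by (rule term_le_Lq)
        then show "norm (us l n - u n) \<le> sqrt (\<delta> l)" using real_le_rsqrt by simp
      qed
      show "(\<lambda>l. sqrt (\<delta> l)) \<longlonglongrightarrow> 0" using tendsto_real_sqrt[OF dl] by simp
    qed
    then show ?thesis by (rule LIM_zero_cancel)
  qed
  have step3: "\<exists>N. \<forall>k\<ge>N. us k - u \<in> sob P (real m) \<and> Dm m (us k - u) \<le> \<epsilon>" if e: "\<epsilon> > 0" for \<epsilon>
  proof -
    obtain N where N: "\<And>k l. k \<ge> N \<Longrightarrow> l \<ge> N \<Longrightarrow> Dm m (us k - us l) \<le> \<epsilon>" using step1[OF e] by blast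
    show ?thesis
    proof (intro exI[of _ N] allI impI conjI)
      fix k assume k: "N \<le> k"
      have D1: "\<And>l. l \<ge> N \<Longrightarrow> us k - us l \<in> sob P (real m)" by (rule sobm_diff[OF usD usD])
      have D2: "\<And>l. l \<ge> N \<Longrightarrow> Dm m (us k - us l) \<le> \<epsilon>" by (rule N[OF k])
      note DL = Dm_lim[OF pw D1 D2]
      have sL: "(\<lambda>j. (cmod ((us k - u) j))^2) summable_on UNIV" using dH[of k] unfolding sob0_iff by blast
      have sup: "\<forall>n. n \<notin> P \<longrightarrow> (us k - u) n = 0" using dH[of k] unfolding sob0_iff by blast
      have sR: "(\<lambda>n. 4^m * ((real_of_int n * pi)^(2*m) * (cmod ((us k - u) n))^2 + (cmod ((us k - u) n))^2)) summable_on UNIV"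
        by (intro summable_on_cmult_right summable_on_add sL) (use DL(1) in simp)
      have "(\<lambda>n. (bracket n ^ m * cmod ((us k - u) n))^2) summable_on UNIV"
      proof (rule summable_on_comparison_test[OF sR])
        fix n
        have "(bracket n ^ m)^2 * (cmod ((us k - u) n))^2 \<le> 4^m * ((real_of_int n * pi)^(2*m) + 1) * (cmod ((us k - u) n))^2"
          by (rule mult_right_mono[OF br_le]) simp
        then show "(bracket n ^ m * cmod ((us k - u) n))^2 \<le> 4^m * ((real_of_int n * pi)^(2*m) * (cmod ((us k - u) n))^2 + (cmod ((us k - u) n))^2)"
          by (simp add: power_mult_distrib algebra_simps)
      qed simp
      then show "us k - u \<in> sob P (real m)" unfolding sobm_iff using sup by blast
      show "Dm m (us k - u) \<le> \<epsilon>" unfolding Dm_def using DL(2) by simp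
    qed
  qed
  obtain N0 where N0: "us N0 - u \<in> sob P (real m)" using step3[of 1] by auto
  have "us N0 - (us N0 - u) \<in> sob P (real m)" by (rule sobm_diff[OF usD N0])
  moreover have "us N0 - (us N0 - u) = u" by (simp add: fun_eq_iff)
  ultimately show "u \<in> sob P (real m)" by simp
  show "(\<lambda>k. form_t m V (us k - u) (us k - u)) \<longlonglongrightarrow> 0"
  proof (rule LIMSEQ_I)
    fix r :: real assume r: "r > 0"
    obtain N1 where N1: "\<And>k. k \<ge> N1 \<Longrightarrow> us k - u \<in> sob P (real m) \<and> Dm m (us k - u) \<le> r / 3"
      using step3[of "r/3"] r by auto
    obtain N2 where N2: "\<And>k. k \<ge> N2 \<Longrightarrow> \<delta> k < r / (3 * (C + 1))"
      using dev[of "r / (3 * (C + 1))"] r C0 by auto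
    show "\<exists>no. \<forall>k\<ge>no. norm (form_t m V (us k - u) (us k - u) - 0) < r"
    proof (intro exI[of _ "max N1 N2"] allI impI)
      fix k assume k: "max N1 N2 \<le> k"
      have a: "us k - u \<in> sob P (real m)" and b: "Dm m (us k - u) \<le> r / 3" using N1 k by auto
      have dk: "\<delta> k < r / (3 * (C + 1))" using N2 k by auto
      have "C * \<delta> k \<le> C * (r / (3 * (C + 1)))" using dk C0 by (intro mult_left_mono) auto
      also have "\<dots> = (C / (C + 1)) * (r / 3)" using C0 by (simp add: field_simps)
      also have "\<dots> \<le> 1 * (r / 3)" using C0 r by (intro mult_right_mono) auto
      finally have c: "C * \<delta> k \<le> r / 3" by simp
      have "cmod (form_t m V (us k - u) (us k - u)) \<le> 3/2 * Dm m (us k - u) + C * Lq (us k - u)"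
        by (rule formest(2)[OF C a])
      then show "norm (form_t m V (us k - u) (us k - u) - 0) < r" using b c r unfolding \<delta>_def by simp
    qed
  qed
qed



lemma dense: "densely_defined (sob P 0) (sob P (real m))"
  unfolding densely_defined_def
proof (intro conjI ballI allI impI)
  show "sob P (real m) \<subseteq> sob P 0" using sobm_sub0 by blast
  fix f and \<epsilon> :: real assume f: "f \<in> sob P 0" and e: "\<epsilon> > 0"
  have sf: "(\<lambda>k. (cmod (f k))^2) summable_on UNIV" and sup: "\<forall>n. n \<notin> P \<longrightarrow> f n = 0"
    using f unfolding sob0_iff by auto
  obtain F where F: "finite F" "(\<Sum>\<^sub>\<infinity>k\<in>UNIV - F. (cmod (f k))^2) \<le> (\<epsilon>/2)^2"
    using tail[OF _ sf, of "(\<epsilon>/2)^2"] e by auto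
  define u where "u n = (if n \<in> F then f n else 0)" for n
  have "(\<lambda>k. (bracket k ^ m * cmod (u k))^2) summable_on F" using F(1) by simp
  moreover have "(\<lambda>k. (bracket k ^ m * cmod (u k))^2) summable_on F \<longleftrightarrow> (\<lambda>k. (bracket k ^ m * cmod (u k))^2) summable_on UNIV"
    by (rule summable_on_cong_neutral) (auto simp: u_def)
  ultimately have "(\<lambda>k. (bracket k ^ m * cmod (u k))^2) summable_on UNIV" by blast
  moreover have "\<forall>n. n \<notin> P \<longrightarrow> u n = 0" using sup by (simp add: u_def)
  ultimately have uD: "u \<in> sob P (real m)" unfolding sobm_iff by blast
  have "(\<Sum>\<^sub>\<infinity>k. (cmod ((f - u) k))^2) = (\<Sum>\<^sub>\<infinity>k\<in>UNIV - F. (cmod (f k))^2)"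
    by (rule infsum_cong_neutral) (auto simp: u_def)
  hence "l2norm (f - u) = sqrt (\<Sum>\<^sub>\<infinity>k\<in>UNIV - F. (cmod (f k))^2)" unfolding l2norm_def by simp
  also have "\<dots> \<le> sqrt ((\<epsilon>/2)^2)" using F(2) by (rule real_sqrt_le_mono)
  also have "\<dots> = \<epsilon>/2" using e by simp
  finally have "l2norm (f - u) < \<epsilon>" using e by simp
  then show "\<exists>u\<in>sob P (real m). l2norm (f - u) < \<epsilon>" using uD by blast
qed

lemma welldef:
  assumes m: "m \<ge> 1" and sW: "(\<lambda>k. (cmod (V k) / bracket k ^ m)^2) summable_on UNIV"
  shows "form_well_defined m V (sob P (real m))"
  unfolding form_well_defined_def
proof (intro ballI conjI allI)
  fix u v assume u: "u \<in> sob P (real m)" and v: "v \<in> sob P (real m)"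
  have su: "(\<lambda>k. (bracket k ^ m * cmod (u k))^2) summable_on UNIV" using u unfolding sobm_iff by blast
  have sv: "(\<lambda>k. (bracket k ^ m * cmod (v k))^2) summable_on UNIV" using v unfolding sobm_iff by blast
  show "(\<lambda>j. V (n - j) * u j) summable_on UNIV" for n by (rule pairB(1)[OF m sW su sv])
  show "(\<lambda>n. Dpow m u n * cnj (v n)) summable_on UNIV" by (rule pairD_summable[OF su sv])
  show "(\<lambda>n. mult_distr V u n * cnj (v n)) summable_on UNIV" by (rule pairB(2)[OF m sW su sv])
qed

theorem corollary1:
  fixes m :: nat and V :: "int \<Rightarrow> complex"
  assumes "m \<ge> 1"
    and "V \<in> sob Pplus (- real m)"
  shows "\<forall>P\<in>{Pplus, Pminus}.
           form_well_defined m V (sob P (real m)) \<and>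
           densely_defined (sob P 0) (sob P (real m)) \<and>
           closed_form (sob P 0) (sob P (real m)) (form_t m V) \<and>
           sectorial_form (sob P 0) (sob P (real m)) (form_t m V)"
proof -
  have sW: "(\<lambda>k. (cmod (V k) / bracket k ^ m)^2) summable_on UNIV" by (rule sobneg[OF assms(2)])
  obtain C where C0: "C \<ge> 0" and C: "\<And>u. (\<lambda>k. (bracket k ^ m * cmod (u k))^2) summable_on UNIV \<Longrightarrow>
           cmod (pairing (mult_distr V u) u) \<le> Dm m u / 2 + C * Lq u"
    using key[OF assms(1) sW] by blast
  have "form_well_defined m V (sob P (real m)) \<and>
           densely_defined (sob P 0) (sob P (real m)) \<and>
           closed_form (sob P 0) (sob P (real m)) (form_t m V) \<and>
           sectorial_form (sob P 0) (sob P (real m)) (form_t m V)" for P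
    using welldef[OF assms(1) sW] dense closed[OF C0 C] sectorial[OF C0 C] by blast
  then show ?thesis by blast
qed

end
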